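(* Let $A,B$ be real symmetric $n\times n$ matrices with $\|A\|\le2.5$, and let $\eta>0$. Let $X^{\mathsf c}$ be the solution of $$\min_{X\in\mathbb R^{n\times n}}\|AX-XB\|_F^2+\eta^2\|X\|_F^2\quad\text{s.t. }X\mathbf 1=\mathbf 1.$$ Then $$X^{\mathsf c}=\frac1{2\pi}\operatorname{Re}\oint_\Gamma F(z)R_A(z)\mathbf JR_B(z+\mathbf i\eta)\,dz,\qquad F(z)=\frac{2\mathbf i}{\mathbf 1^\top R_B(z+\mathbf i\eta)\mathbf 1-\mathbf 1^\top R_B(z-\mathbf i\eta)\mathbf 1},$$ where $\Gamma$ is the boundary of the rectangle with vertices $\pm3\pm\mathbf i\eta/2$, traversed counterclockwise.
   Context: $R_M(z)=(M-z\mathbf I)^{-1}$ is the resolvent of a symmetric matrix $M$; $\mathbf J$ is the all-ones $n\times n$ matrix and $\mathbf 1$ the all-ones vector; $\|\cdot\|$ is the spectral norm and $\|\cdot\|_F$ the Frobenius norm; real part and integral are entrywise. *)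

theory Defs
  imports "HOL-Complex_Analysis.Complex_Analysis"
begin

definition cmat :: "real^'n^'m \<Rightarrow> complex^'n^'m" where
  "cmat M = (\<chi> i j. complex_of_real (M $ i $ j))"

definition resolvent :: "real^'n^'n \<Rightarrow> complex \<Rightarrow> complex^'n^'n" where
  "resolvent M z = matrix_inv (cmat M - (\<chi> i j. if i = j then z else 0))"

definition onesJ :: "'a::one^'n^'m" where
  "onesJ = (\<chi> i j. 1)"

definition onesv :: "'a::one^'n" where
  "onesv = (\<chi> i. 1)"

definition spec_norm :: "real^'n^'m \<Rightarrow> real" where
  "spec_norm M = onorm (\<lambda>x. M *v x)"

definition frob_sq :: "real^'n^'m \<Rightarrow> real" where
  "frob_sq M = (\<Sum>i\<in>UNIV. \<Sum>j\<in>UNIV. (M $ i $ j)\<^sup>2)"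

definition symmetric_mat :: "real^'n^'n \<Rightarrow> bool" where
  "symmetric_mat M \<longleftrightarrow> transpose M = M"

definition objective :: "real^'n^'n \<Rightarrow> real^'n^'n \<Rightarrow> real \<Rightarrow> real^'n^'n \<Rightarrow> real" where
  "objective A B \<eta> X = frob_sq (A ** X - X ** B) + \<eta>\<^sup>2 * frob_sq X"

definition is_solution :: "real^'n^'n \<Rightarrow> real^'n^'n \<Rightarrow> real \<Rightarrow> real^'n^'n \<Rightarrow> bool" where
  "is_solution A B \<eta> X \<longleftrightarrow> X *v onesv = onesv \<and>
     (\<forall>Y. Y *v onesv = onesv \<longrightarrow> objective A B \<eta> X \<le> objective A B \<eta> Y)"

definition rect_contour :: "real \<Rightarrow> real \<Rightarrow> complex" where
  "rect_contour \<eta> =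
     linepath (Complex (-3) (-\<eta>/2)) (Complex 3 (-\<eta>/2)) +++
     linepath (Complex 3 (-\<eta>/2)) (Complex 3 (\<eta>/2)) +++
     linepath (Complex 3 (\<eta>/2)) (Complex (-3) (\<eta>/2)) +++
     linepath (Complex (-3) (\<eta>/2)) (Complex (-3) (-\<eta>/2))"

definition Ffun :: "real^'n^'n \<Rightarrow> real \<Rightarrow> complex \<Rightarrow> complex" where
  "Ffun B \<eta> z = 2 * \<i> /
     ((\<Sum>i\<in>UNIV. (resolvent B (z + \<i> * of_real \<eta>) *v onesv) $ i)
      - (\<Sum>i\<in>UNIV. (resolvent B (z - \<i> * of_real \<eta>) *v onesv) $ i))"

end

theory Submission
  imports Defs
begin

no_notation fps_nth (infixl "$" 75)


lemma sym_entry: "symmetric_mat M \<Longrightarrow> M $ j $ i = M $ i $ j"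
  unfolding symmetric_mat_def by (metis transpose_def vec_lambda_beta)

lemma cmat_entry[simp]: "cmat M $ i $ j = complex_of_real (M $ i $ j)"
  by (simp add: cmat_def)

lemma qform_real:
  fixes M :: "real^'n^'n" and u :: "complex^'n"
  assumes "symmetric_mat M"
  shows "Im (\<Sum>i\<in>UNIV. cnj (u$i) * (cmat M *v u)$i) = 0"
proof -
  define q where "q = (\<Sum>i\<in>UNIV. cnj (u$i) * (cmat M *v u)$i)"
  have q: "q = (\<Sum>i\<in>UNIV. \<Sum>j\<in>UNIV. cnj (u$i) * of_real (M$i$j) * u$j)"
    unfolding q_def matrix_vector_mult_def by (simp add: sum_distrib_left mult.assoc)
  have "cnj q = (\<Sum>i\<in>UNIV. \<Sum>j\<in>UNIV. u$i * of_real (M$i$j) * cnj (u$j))"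
    unfolding q by simp
  also have "\<dots> = (\<Sum>j\<in>UNIV. \<Sum>i\<in>UNIV. u$i * of_real (M$i$j) * cnj (u$j))"
    by (rule sum.swap)
  also have "\<dots> = q" unfolding q
    by (intro sum.cong refl) (simp add: sym_entry[OF assms] mult.commute mult.left_commute)
  finally have "cnj q = q" .
  then have "Im (cnj q) = Im q" by simp
  then show ?thesis unfolding q_def[symmetric] by simp
qed

lemma matrix_inv_props:
  fixes N :: "'a::field^'n^'n"
  assumes "invertible N"
  shows "N ** matrix_inv N = mat 1" "matrix_inv N ** N = mat 1"
proof -
  have "\<exists>A'. N ** A' = mat 1 \<and> A' ** N = mat 1" using assms unfolding invertible_def by blast
  from someI_ex[OF this] show "N ** matrix_inv N = mat 1" "matrix_inv N ** N = mat 1"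
    unfolding matrix_inv_def by auto
qed

lemma matrix_inv_unique:
  fixes N P :: "'a::field^'n^'n"
  assumes "N ** P = mat 1"
  shows "matrix_inv N = P"
proof -
  have inv: "invertible N" using assms invertible_right_inverse by blast
  have "matrix_inv N = matrix_inv N ** (N ** P)" by (simp add: assms)
  also have "\<dots> = (matrix_inv N ** N) ** P" by (simp add: matrix_mul_assoc)
  also have "\<dots> = P" by (simp add: matrix_inv_props[OF inv])
  finally show ?thesis .
qed

lemma invertible_of_ker:
  fixes N :: "'a::field^'n^'n"
  assumes "\<And>v. N *v v = 0 \<Longrightarrow> v = 0"
  shows "invertible N"
  using assms matrix_left_invertible_ker invertible_left_inverse by blast


lemma mat_minus_mult: "(N - mat w) *v v = N *v v - w *s v"
  for N :: "'a::comm_ring_1^'n^'n"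
proof -
  have "mat w *v v = w *s v"
    by (simp add: vec_eq_iff matrix_vector_mult_def mat_def if_distrib[of "\<lambda>x. x * _"] cong: if_cong)
  then show ?thesis by (simp add: matrix_vector_mult_diff_rdistrib)
qed

lemma eig_props:
  fixes M :: "real^'n^'n" and v :: "complex^'n"
  assumes sym: "symmetric_mat M" and v: "v \<noteq> 0" and ev: "cmat M *v v = w *s v"
  shows "Im w = 0" "\<bar>Re w\<bar> \<le> spec_norm M"
proof -
  have pos: "(\<Sum>i\<in>UNIV. (cmod (v$i))\<^sup>2) > 0"
  proof -
    obtain k where "v$k \<noteq> 0" using v by (metis vec_eq_iff zero_index)
    then have "(cmod (v$k))\<^sup>2 > 0" by simp
    moreover have "(cmod (v$k))\<^sup>2 \<le> (\<Sum>i\<in>UNIV. (cmod (v$i))\<^sup>2)"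
      by (rule member_le_sum) auto
    ultimately show ?thesis by linarith
  qed
  have "(\<Sum>i\<in>UNIV. cnj (v$i) * (cmat M *v v)$i) = w * of_real (\<Sum>i\<in>UNIV. (cmod (v$i))\<^sup>2)"
    unfolding ev by (simp add: sum_distrib_left, intro sum.cong refl) (simp add: complex_norm_square[symmetric] mult.commute)
  with qform_real[OF sym, of v] have "Im w * (\<Sum>i\<in>UNIV. (cmod (v$i))\<^sup>2) = 0"
    by simp
  with pos show imw: "Im w = 0" by simp
  define r where "r = Re w"
  have wr: "w = of_real r" using imw r_def by (simp add: complex_eq_iff)
  define x where "x = (\<chi> i. Re (v$i))"
  define y where "y = (\<chi> i. Im (v$i))"
  have evc: "\<And>i. (\<Sum>j\<in>UNIV. of_real (M$i$j) * v$j) = of_real r * v$i"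
    using ev unfolding wr by (simp add: vec_eq_iff matrix_vector_mult_def)
  have ex: "M *v x = r *\<^sub>R x"
  proof -
    have "\<And>i. Re (\<Sum>j\<in>UNIV. of_real (M$i$j) * v$j) = Re (of_real r * v$i)" using evc by simp
    then show ?thesis by (simp add: vec_eq_iff matrix_vector_mult_def x_def Re_sum)
  qed
  have ey: "M *v y = r *\<^sub>R y"
  proof -
    have "\<And>i. Im (\<Sum>j\<in>UNIV. of_real (M$i$j) * v$j) = Im (of_real r * v$i)" using evc by simp
    then show ?thesis by (simp add: vec_eq_iff matrix_vector_mult_def y_def Im_sum)
  qed
  have bl: "bounded_linear (\<lambda>x. M *v x)" by simp
  have key: "\<bar>r\<bar> \<le> spec_norm M" if "z \<noteq> 0" "M *v z = r *\<^sub>R z" for z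
  proof -
    have "\<bar>r\<bar> * norm z = norm (M *v z)" using that by simp
    also have "\<dots> \<le> spec_norm M * norm z" unfolding spec_norm_def by (rule onorm[OF bl])
    finally show ?thesis using that by simp
  qed
  have "x \<noteq> 0 \<or> y \<noteq> 0"
    using v by (auto simp: vec_eq_iff x_def y_def complex_eq_iff)
  then show "\<bar>Re w\<bar> \<le> spec_norm M" using key ex ey r_def by blast
qed


lemma eig_real_vec:
  fixes M :: "real^'n^'n" and v :: "complex^'n"
  assumes sym: "symmetric_mat M" and v: "v \<noteq> 0" and ev: "cmat M *v v = w *s v"
  shows "\<exists>x. x \<noteq> 0 \<and> M *v x = Re w *\<^sub>R x"
proof -
  have imw: "Im w = 0" by (rule eig_props[OF assms])
  define r where "r = Re w"
  have wr: "w = of_real r" using imw r_def by (simp add: complex_eq_iff)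
  define x where "x = (\<chi> i. Re (v$i))"
  define y where "y = (\<chi> i. Im (v$i))"
  have evc: "\<And>i. (\<Sum>j\<in>UNIV. of_real (M$i$j) * v$j) = of_real r * v$i"
    using ev unfolding wr by (simp add: vec_eq_iff matrix_vector_mult_def)
  have ex: "M *v x = r *\<^sub>R x"
  proof -
    have "\<And>i. Re (\<Sum>j\<in>UNIV. of_real (M$i$j) * v$j) = Re (of_real r * v$i)" using evc by simp
    then show ?thesis by (simp add: vec_eq_iff matrix_vector_mult_def x_def Re_sum)
  qed
  have ey: "M *v y = r *\<^sub>R y"
  proof -
    have "\<And>i. Im (\<Sum>j\<in>UNIV. of_real (M$i$j) * v$j) = Im (of_real r * v$i)" using evc by simp
    then show ?thesis by (simp add: vec_eq_iff matrix_vector_mult_def y_def Im_sum)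
  qed
  have "x \<noteq> 0 \<or> y \<noteq> 0"
    using v by (auto simp: vec_eq_iff x_def y_def complex_eq_iff)
  then show ?thesis using ex ey r_def by blast
qed

lemma resolvent_alt: "resolvent M z = matrix_inv (cmat M - mat z)"
  unfolding resolvent_def mat_def ..

lemma invertible_shift:
  fixes M :: "real^'n^'n"
  assumes sym: "symmetric_mat M" and w: "Im w \<noteq> 0 \<or> \<bar>Re w\<bar> > spec_norm M"
  shows "invertible (cmat M - mat w)"
proof (rule invertible_of_ker, rule ccontr)
  fix v assume "(cmat M - mat w) *v v = 0" "v \<noteq> 0"
  then have "cmat M *v v = w *s v" by (simp add: mat_minus_mult)
  from eig_props[OF sym \<open>v \<noteq> 0\<close> this] w show False by linarith
qed

lemma not_invertible_ker:
  fixes N :: "'a::field^'n^'n"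
  assumes "\<not> invertible N"
  shows "\<exists>v. v \<noteq> 0 \<and> N *v v = 0"
  using assms invertible_of_ker by blast

lemma sym_inner:
  fixes M :: "real^'n^'n"
  assumes "symmetric_mat M"
  shows "inner (M *v x) y = inner x (M *v y)"
proof -
  have "inner (M *v x) y = (\<Sum>i\<in>UNIV. \<Sum>j\<in>UNIV. M$i$j * x$j * y$i)"
    by (simp add: inner_vec_def matrix_vector_mult_def sum_distrib_right)
  also have "\<dots> = (\<Sum>j\<in>UNIV. \<Sum>i\<in>UNIV. M$i$j * x$j * y$i)" by (rule sum.swap)
  also have "\<dots> = inner x (M *v y)"
    by (simp add: inner_vec_def matrix_vector_mult_def sum_distrib_left sym_entry[OF assms] mult_ac)
  finally show ?thesis .
qed

lemma finite_eigenvalues: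
  fixes M :: "real^'n^'n"
  assumes sym: "symmetric_mat M"
  shows "finite {r. \<exists>x. x \<noteq> 0 \<and> M *v x = r *\<^sub>R x}"
proof -
  define E where "E = {r. \<exists>x. x \<noteq> 0 \<and> M *v x = r *\<^sub>R x}"
  define ev where "ev r = (SOME x. x \<noteq> 0 \<and> M *v x = r *\<^sub>R x)" for r
  have evp: "ev r \<noteq> 0 \<and> M *v ev r = r *\<^sub>R ev r" if "r \<in> E" for r
    using that unfolding E_def ev_def by (metis (mono_tags, lifting) mem_Collect_eq someI_ex)
  have inj: "inj_on ev E"
  proof (rule inj_onI)
    fix r s assume rs: "r \<in> E" "s \<in> E" "ev r = ev s"
    have "r *\<^sub>R ev r = M *v ev r" using evp[OF rs(1)] by simp
    also have "\<dots> = s *\<^sub>R ev r" using evp[OF rs(2)] rs(3) by simp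
    finally have "r *\<^sub>R ev r = s *\<^sub>R ev r" .
    moreover have "ev r \<noteq> 0" using evp[OF rs(1)] by blast
    ultimately show "r = s" by (metis scaleR_cancel_right)
  qed
  have orth: "pairwise orthogonal (ev ` E)"
  proof (unfold pairwise_def, intro ballI impI)
    fix a b assume "a \<in> ev ` E" "b \<in> ev ` E" "a \<noteq> b"
    then obtain r s where rs: "r \<in> E" "s \<in> E" "ev r \<noteq> ev s" and ab: "a = ev r" "b = ev s" by blast
    have "r \<noteq> s" using rs(3) by blast
    have "r * inner (ev r) (ev s) = inner (r *\<^sub>R ev r) (ev s)" by simp
    also have "\<dots> = inner (M *v ev r) (ev s)" using evp[OF rs(1)] by simp
    also have "\<dots> = inner (ev r) (M *v ev s)" by (rule sym_inner[OF sym])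
    also have "\<dots> = inner (ev r) (s *\<^sub>R ev s)" using evp[OF rs(2)] by simp
    also have "\<dots> = s * inner (ev r) (ev s)" by simp
    finally have "(r - s) * inner (ev r) (ev s) = 0" by (simp add: left_diff_distrib)
    with \<open>r \<noteq> s\<close> show "orthogonal a b" unfolding ab by (simp add: orthogonal_def)
  qed
  have "0 \<notin> ev ` E" using evp by auto
  then have "independent (ev ` E)" using pairwise_orthogonal_independent[OF orth] by blast
  then have "finite (ev ` E)" using independent_bound by blast
  then show ?thesis using finite_imageD[OF _ inj] unfolding E_def by blast
qed

lemma sing_finite:
  fixes M :: "real^'n^'n"
  assumes sym: "symmetric_mat M"
  shows "finite {z. \<not> invertible (cmat M - mat z)}"
proof -
  define E where "E = {r. \<exists>x. x \<noteq> 0 \<and> M *v x = r *\<^sub>R x}"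
  have "{z. \<not> invertible (cmat M - mat z)} \<subseteq> complex_of_real ` E"
  proof
    fix z assume "z \<in> {z. \<not> invertible (cmat M - mat z)}"
    then obtain v where v: "v \<noteq> 0" "(cmat M - mat z) *v v = 0" using not_invertible_ker by blast
    then have ev: "cmat M *v v = z *s v" by (simp add: mat_minus_mult)
    have "Im z = 0" using eig_props[OF sym v(1) ev] by simp
    then have "z = of_real (Re z)" by (simp add: complex_eq_iff)
    moreover have "Re z \<in> E" using eig_real_vec[OF sym v(1) ev] unfolding E_def by blast
    ultimately show "z \<in> complex_of_real ` E" by blast
  qed
  moreover have "finite E" using finite_eigenvalues[OF sym] unfolding E_def .
  ultimately show ?thesis using finite_subset by blast
qed

lemma sing_real:
  fixes M :: "real^'n^'n"
  assumes sym: "symmetric_mat M" and "\<not> invertible (cmat M - mat z)"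
  shows "Im z = 0" "\<bar>Re z\<bar> \<le> spec_norm M"
proof -
  have "\<not> (Im z \<noteq> 0 \<or> \<bar>Re z\<bar> > spec_norm M)" using invertible_shift[OF sym, of z] assms(2) by blast
  then show "Im z = 0" "\<bar>Re z\<bar> \<le> spec_norm M" by auto
qed

lemma sum_delta_l: "(\<Sum>k\<in>UNIV. (if i = k then w else 0) * f k) = w * f i"
  for f :: "'n::finite \<Rightarrow> 'a::comm_ring_1"
proof -
  have "(\<Sum>k\<in>UNIV. (if i = k then w else 0) * f k) = (\<Sum>k\<in>UNIV. if i = k then w * f k else 0)"
    by (rule sum.cong) auto
  then show ?thesis by simp
qed

lemma sum_delta_r: "(\<Sum>k\<in>UNIV. f k * (if k = j then w else 0)) = w * f j"
  for f :: "'n::finite \<Rightarrow> 'a::comm_ring_1"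
proof -
  have "(\<Sum>k\<in>UNIV. f k * (if k = j then w else 0)) = (\<Sum>k\<in>UNIV. if j = k then w * f k else 0)"
    by (rule sum.cong) auto
  then show ?thesis by simp
qed

lemma mat_entry: "mat c $ i $ j = (if i = j then c else 0)"
  by (simp add: mat_def)

lemma resolvent_eqs:
  fixes M :: "real^'n^'n"
  assumes inv: "invertible (cmat M - mat w)"
  shows "(\<Sum>k\<in>UNIV. of_real (M$i$k) * resolvent M w $k$j) = (if i = j then 1 else 0) + w * resolvent M w $i$j"
    and "(\<Sum>k\<in>UNIV. resolvent M w $i$k * of_real (M$k$j)) = (if i = j then 1 else 0) + w * resolvent M w $i$j"
proof -
  let ?R = "resolvent M w"
  have 1: "(cmat M - mat w) ** ?R = mat 1" and 2: "?R ** (cmat M - mat w) = mat 1"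
    using matrix_inv_props[OF inv] unfolding resolvent_alt by auto
  have "((cmat M - mat w) ** ?R) $ i $ j = (if i = j then 1 else 0)"
    unfolding 1 mat_entry ..
  then have a: "(\<Sum>k\<in>UNIV. (of_real (M$i$k) - (if i = k then w else 0)) * ?R$k$j) = (if i = j then 1 else 0)"
    unfolding matrix_matrix_mult_def by (simp add: mat_entry)
  have b: "(\<Sum>k\<in>UNIV. (of_real (M$i$k) - (if i = k then w else 0)) * ?R$k$j) =
     (\<Sum>k\<in>UNIV. of_real (M$i$k) * ?R$k$j) - (\<Sum>k\<in>UNIV. (if i = k then w else 0) * ?R$k$j)"
    by (simp only: left_diff_distrib sum_subtractf)
  have c: "(\<Sum>k\<in>UNIV. (if i = k then w else 0) * ?R$k$j) = w * ?R$i$j"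
    by (rule sum_delta_l)
  have h: "(\<Sum>k\<in>UNIV. of_real (M$i$k) * ?R $k$j) - w * ?R $i$j = (if i = j then 1 else 0)"
    using trans[OF sym[OF b] a] unfolding c .
  then show "(\<Sum>k\<in>UNIV. of_real (M$i$k) * ?R $k$j) = (if i = j then 1 else 0) + w * ?R $i$j"
    by (simp only: diff_eq_eq)
  have "(?R ** (cmat M - mat w)) $ i $ j = (if i = j then 1 else 0)"
    unfolding 2 mat_entry ..
  then have a2: "(\<Sum>k\<in>UNIV. ?R$i$k * (of_real (M$k$j) - (if k = j then w else 0))) = (if i = j then 1 else 0)"
    unfolding matrix_matrix_mult_def by (simp add: mat_entry)
  have b2: "(\<Sum>k\<in>UNIV. ?R$i$k * (of_real (M$k$j) - (if k = j then w else 0))) =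
     (\<Sum>k\<in>UNIV. ?R$i$k * of_real (M$k$j)) - (\<Sum>k\<in>UNIV. ?R$i$k * (if k = j then w else 0))"
    by (simp only: right_diff_distrib sum_subtractf)
  have c2: "(\<Sum>k\<in>UNIV. ?R$i$k * (if k = j then w else 0)) = w * ?R$i$j"
    by (rule sum_delta_r)
  have h2: "(\<Sum>k\<in>UNIV. ?R$i$k * of_real (M$k$j)) - w * ?R $i$j = (if i = j then 1 else 0)"
    using trans[OF sym[OF b2] a2] unfolding c2 .
  then show "(\<Sum>k\<in>UNIV. ?R$i$k * of_real (M$k$j)) = (if i = j then 1 else 0) + w * ?R $i$j"
    by (simp only: diff_eq_eq)
qed


lemma mult_cnj_sq: "z * cnj z = (complex_of_real (cmod z))\<^sup>2"
  by (metis complex_norm_square of_real_power)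

lemma det_holo:
  fixes N :: "complex \<Rightarrow> complex^'n^'n"
  assumes "\<And>a b. (\<lambda>z. N z $ a $ b) holomorphic_on S"
  shows "(\<lambda>z. det (N z)) holomorphic_on S"
  unfolding det_def
  by (intro holomorphic_on_sum holomorphic_on_mult holomorphic_on_const holomorphic_on_prod assms)

lemma inv_entry_cramer:
  fixes N :: "complex^'n^'n"
  assumes inv: "invertible N"
  shows "matrix_inv N $ k $ j = det (\<chi> a b. if b = k then (if a = j then 1 else 0) else N$a$b) / det N"
proof -
  let ?P = "matrix_inv N" and ?b = "axis j (1::complex)"
  have d: "det N \<noteq> 0" using inv invertible_det_nz by blast
  have "N *v (?P *v ?b) = ?b"
    by (simp add: matrix_vector_mul_assoc matrix_inv_props[OF inv])
  then have h1: "?P *v ?b = (\<chi> k. det(\<chi> i l. if l = k then ?b$i else N$i$l) / det N)"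
    using cramer[OF d] by blast
  have h2: "(?P *v ?b) $ k = ?P $ k $ j"
    by (simp add: matrix_vector_mult_def axis_def sum_delta_r[where w=1, simplified] if_distrib cong: if_cong)
  have h3: "(\<chi> i l. if l = k then ?b$i else N$i$l) = (\<chi> a b. if b = k then (if a = j then 1 else 0) else N$a$b)"
    by (rule arg_cong[where f=vec_lambda], rule ext, rule arg_cong[where f=vec_lambda], rule ext) (simp add: axis_def)
  have "?P $k$j = (?P *v ?b) $ k" using h2 by simp
  also have "\<dots> = det(\<chi> i l. if l = k then ?b$i else N$i$l) / det N" unfolding h1 by simp
  also have "\<dots> = det (\<chi> a b. if b = k then (if a = j then 1 else 0) else N$a$b) / det N" unfolding h3 ..
  finally show ?thesis .
qed

lemma inv_holo:
  fixes N :: "complex \<Rightarrow> complex^'n^'n"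
  assumes h: "\<And>a b. (\<lambda>z. N z $ a $ b) holomorphic_on S"
    and inv: "\<And>z. z \<in> S \<Longrightarrow> invertible (N z)"
  shows "(\<lambda>z. matrix_inv (N z) $ k $ j) holomorphic_on S"
proof -
  have "(\<lambda>z. det (\<chi> a b. if b = k then (if a = j then 1 else 0) else N z$a$b) / det (N z)) holomorphic_on S"
  proof (intro holomorphic_on_divide det_holo)
    fix a b show "(\<lambda>z. (\<chi> a b. if b = k then (if a = j then 1 else 0) else N z$a$b) $ a $ b) holomorphic_on S"
      by (cases "b = k") (simp_all add: h)
  next
    show "(\<lambda>z. N z $ a $ b) holomorphic_on S" for a b by (rule h)
  next
    show "\<And>z. z \<in> S \<Longrightarrow> det (N z) \<noteq> 0" using inv invertible_det_nz by blast
  qed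
  then show ?thesis
    by (rule holomorphic_transform) (simp add: inv_entry_cramer[OF inv])
qed

lemma resolvent_holo:
  fixes M :: "real^'n^'n"
  assumes g: "g holomorphic_on S" and inv: "\<And>z. z \<in> S \<Longrightarrow> invertible (cmat M - mat (g z))"
  shows "(\<lambda>z. resolvent M (g z) $ i $ j) holomorphic_on S"
  unfolding resolvent_alt
proof (rule inv_holo[OF _ inv])
  fix a b show "(\<lambda>z. (cmat M - mat (g z)) $ a $ b) holomorphic_on S"
    by (cases "a = b") (auto intro!: holomorphic_intros g simp: mat_entry)
qed

lemma Im_s_sign:
  fixes M :: "real^'n^'n"
  assumes sym: "symmetric_mat M" and w: "Im w \<noteq> 0"
  shows "Im (\<Sum>i\<in>UNIV. (resolvent M w *v onesv) $ i) = Im w * (\<Sum>i\<in>UNIV. (cmod ((resolvent M w *v onesv)$i))\<^sup>2)"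
    and "(\<Sum>i\<in>UNIV. (cmod ((resolvent M w *v onesv)$i))\<^sup>2) > 0"
proof -
  have inv: "invertible (cmat M - mat w)" using invertible_shift[OF sym] w by blast
  define u where "u = resolvent M w *v onesv"
  have "(cmat M - mat w) *v u = onesv"
    unfolding u_def resolvent_alt by (simp add: matrix_vector_mul_assoc matrix_inv_props[OF inv])
  then have cu: "cmat M *v u = onesv + w *s u" by (simp add: mat_minus_mult diff_eq_eq)
  have "(\<Sum>i\<in>UNIV. cnj (u$i) * (cmat M *v u)$i) = (\<Sum>i\<in>UNIV. cnj (u$i)) + w * of_real (\<Sum>i\<in>UNIV. (cmod (u$i))\<^sup>2)"
    unfolding cu by (simp add: distrib_left sum.distrib sum_distrib_left onesv_def mult_cnj_sq mult_ac)
  then have "Im (\<Sum>i\<in>UNIV. cnj (u$i)) + Im w * (\<Sum>i\<in>UNIV. (cmod (u$i))\<^sup>2) = 0"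
    using qform_real[OF sym, of u] by simp
  moreover have "Im (\<Sum>i\<in>UNIV. cnj (u$i)) = - Im (\<Sum>i\<in>UNIV. u$i)" by (simp add: Im_sum sum_negf)
  ultimately show "Im (\<Sum>i\<in>UNIV. (resolvent M w *v onesv) $ i) = Im w * (\<Sum>i\<in>UNIV. (cmod ((resolvent M w *v onesv)$i))\<^sup>2)"
    unfolding u_def by simp
  have "u \<noteq> 0"
  proof
    assume "u = 0"
    with \<open>(cmat M - mat w) *v u = onesv\<close> have "(onesv :: complex^'n) = 0" by simp
    then have "(onesv :: complex^'n) $ undefined = 0" by simp
    then show False by (simp add: onesv_def)
  qed
  then obtain k where "u$k \<noteq> 0" using vec_eq_iff[of u 0] by auto
  then have "(cmod (u$k))\<^sup>2 > 0" by simp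
  moreover have "(cmod (u$k))\<^sup>2 \<le> (\<Sum>i\<in>UNIV. (cmod (u$i))\<^sup>2)"
    by (rule member_le_sum) auto
  ultimately show "(\<Sum>i\<in>UNIV. (cmod ((resolvent M w *v onesv)$i))\<^sup>2) > 0" unfolding u_def by linarith
qed

lemma cnj_resolvent:
  fixes M :: "real^'n^'n"
  assumes inv: "invertible (cmat M - mat w)"
  shows "cnj (resolvent M w $ i $ j) = resolvent M (cnj w) $ i $ j"
proof -
  let ?R = "resolvent M w"
  define P where "P = (\<chi> i j. cnj (?R $ i $ j))"
  have 1: "(cmat M - mat w) ** ?R = mat 1"
    using matrix_inv_props[OF inv] unfolding resolvent_alt by auto
  have "(cmat M - mat (cnj w)) ** P = mat 1"
  proof (subst vec_eq_iff, intro allI, subst vec_eq_iff, intro allI)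
    fix a b
    have "((cmat M - mat (cnj w)) ** P) $ a $ b = cnj (((cmat M - mat w) ** ?R) $ a $ b)"
      by (simp add: matrix_matrix_mult_def P_def mat_entry) (rule sum.cong, auto)
    also have "\<dots> = mat 1 $ a $ b" unfolding 1 by (simp add: mat_entry)
    finally show "((cmat M - mat (cnj w)) ** P) $ a $ b = mat 1 $ a $ b" .
  qed
  then have "matrix_inv (cmat M - mat (cnj w)) = P" by (rule matrix_inv_unique)
  then show ?thesis unfolding resolvent_alt P_def by simp
qed


lemma rect_eq: "rect_contour \<eta> = rectpath (Complex (-3) (-\<eta>/2)) (Complex 3 (\<eta>/2))"
  by (simp add: rect_contour_def rectpath_def Let_def)

lemma rect_valid: "valid_path (rect_contour \<eta>)" and rect_closed: "pathfinish (rect_contour \<eta>) = pathstart (rect_contour \<eta>)"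
  unfolding rect_eq by simp_all

lemma rect_image:
  assumes "\<eta> > 0"
  shows "path_image (rect_contour \<eta>) =
     {z. Re z \<in> {-3, 3} \<and> Im z \<in> {-\<eta>/2..\<eta>/2}} \<union> {z. Im z \<in> {-\<eta>/2, \<eta>/2} \<and> Re z \<in> {-3..3}}"
  unfolding rect_eq using assms by (subst path_image_rectpath) auto

lemma rect_image_props:
  assumes "\<eta> > 0" "z \<in> path_image (rect_contour \<eta>)"
  shows "\<bar>Im z\<bar> \<le> \<eta>/2" "\<bar>Re z\<bar> \<le> 3" "\<bar>Re z\<bar> = 3 \<or> \<bar>Im z\<bar> = \<eta>/2"
    "cnj z \<in> path_image (rect_contour \<eta>)"
  using assms(1) assms(2) unfolding rect_image[OF assms(1)] by auto

lemma rect_winding: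
  assumes "\<eta> > 0" "Im z = 0" "\<bar>Re z\<bar> < 3"
  shows "winding_number (rect_contour \<eta>) z = 1"
  unfolding rect_eq using assms by (intro winding_number_rectpath) (auto simp: in_box_complex_iff)

lemma cnj_linepath:
  assumes "f contour_integrable_on linepath a b"
  shows "cnj (contour_integral (linepath a b) f) = contour_integral (linepath (cnj a) (cnj b)) (\<lambda>z. cnj (f (cnj z)))"
proof -
  have "(f has_contour_integral (contour_integral (linepath a b) f)) (linepath a b)"
    using assms by (rule has_contour_integral_integral)
  then have "((\<lambda>x. f (linepath a b x) * (b - a)) has_integral (contour_integral (linepath a b) f)) {0..1}"
    by (simp add: has_contour_integral_linepath)
  from has_integral_linear[OF this bounded_linear_cnj]
  have "((\<lambda>x. cnj (f (linepath a b x) * (b - a))) has_integral cnj (contour_integral (linepath a b) f)) {0..1}"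
    by (simp add: o_def)
  moreover have "cnj (linepath (cnj a) (cnj b) x) = linepath a b x" for x
    by (simp add: linepath_def)
  ultimately have "((\<lambda>x. cnj (f (cnj (linepath (cnj a) (cnj b) x))) * (cnj b - cnj a)) has_integral cnj (contour_integral (linepath a b) f)) {0..1}"
    by simp
  then have "((\<lambda>z. cnj (f (cnj z))) has_contour_integral cnj (contour_integral (linepath a b) f)) (linepath (cnj a) (cnj b))"
    by (simp add: has_contour_integral_linepath)
  then show ?thesis by (rule contour_integral_unique[symmetric])
qed

lemma cnj_rect:
  assumes f: "f contour_integrable_on rect_contour \<eta>"
    and g: "(\<lambda>z. cnj (f (cnj z))) contour_integrable_on rect_contour \<eta>"
  shows "cnj (contour_integral (rect_contour \<eta>) f) = - contour_integral (rect_contour \<eta>) (\<lambda>z. cnj (f (cnj z)))"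
proof -
  define a1 where "a1 = Complex (-3) (-\<eta>/2)"
  define a2 where "a2 = Complex 3 (-\<eta>/2)"
  define a3 where "a3 = Complex 3 (\<eta>/2)"
  define a4 where "a4 = Complex (-3) (\<eta>/2)"
  define f' where "f' = (\<lambda>z. cnj (f (cnj z)))"
  have R: "rect_contour \<eta> = linepath a1 a2 +++ linepath a2 a3 +++ linepath a3 a4 +++ linepath a4 a1"
    unfolding rect_contour_def a1_def a2_def a3_def a4_def ..
  have c: "cnj a1 = a4" "cnj a2 = a3" "cnj a3 = a2" "cnj a4 = a1"
    unfolding a1_def a2_def a3_def a4_def by (simp_all add: complex_eq_iff)
  have split: "contour_integral (rect_contour \<eta>) h =
     contour_integral (linepath a1 a2) h + (contour_integral (linepath a2 a3) h +
       (contour_integral (linepath a3 a4) h + contour_integral (linepath a4 a1) h))"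
    and ints: "h contour_integrable_on linepath a1 a2" "h contour_integrable_on linepath a2 a3"
       "h contour_integrable_on linepath a3 a4" "h contour_integrable_on linepath a4 a1"
    if "h contour_integrable_on rect_contour \<eta>" for h
  proof -
    have h: "h contour_integrable_on (linepath a1 a2 +++ linepath a2 a3 +++ linepath a3 a4 +++ linepath a4 a1)"
      using that unfolding R .
    have h1: "h contour_integrable_on linepath a1 a2" using contour_integrable_joinD1[OF h] by simp
    have h234: "h contour_integrable_on (linepath a2 a3 +++ linepath a3 a4 +++ linepath a4 a1)"
      using contour_integrable_joinD2[OF h] by simp
    have h2: "h contour_integrable_on linepath a2 a3" using contour_integrable_joinD1[OF h234] by simp
    have h34: "h contour_integrable_on (linepath a3 a4 +++ linepath a4 a1)"
      using contour_integrable_joinD2[OF h234] by simp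
    have h3: "h contour_integrable_on linepath a3 a4" using contour_integrable_joinD1[OF h34] by simp
    have h4: "h contour_integrable_on linepath a4 a1" using contour_integrable_joinD2[OF h34] by simp
    show "h contour_integrable_on linepath a1 a2" "h contour_integrable_on linepath a2 a3"
       "h contour_integrable_on linepath a3 a4" "h contour_integrable_on linepath a4 a1"
      by (fact h1 h2 h3 h4)+
    show "contour_integral (rect_contour \<eta>) h =
     contour_integral (linepath a1 a2) h + (contour_integral (linepath a2 a3) h +
       (contour_integral (linepath a3 a4) h + contour_integral (linepath a4 a1) h))"
      unfolding R using h1 h2 h3 h4 h234 h34 by simp
  qed
  have f': "f' contour_integrable_on rect_contour \<eta>" using g unfolding f'_def .
  have rev: "contour_integral (linepath p q) f' = - contour_integral (linepath q p) f'" for p q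
    using contour_integral_reversepath[of "linepath q p" f'] by simp
  have "cnj (contour_integral (rect_contour \<eta>) f) =
     cnj (contour_integral (linepath a1 a2) f) + (cnj (contour_integral (linepath a2 a3) f) +
       (cnj (contour_integral (linepath a3 a4) f) + cnj (contour_integral (linepath a4 a1) f)))"
    unfolding split[OF f] by simp
  also have "\<dots> = contour_integral (linepath a4 a3) f' + (contour_integral (linepath a3 a2) f' +
       (contour_integral (linepath a2 a1) f' + contour_integral (linepath a1 a4) f'))"
    unfolding f'_def using cnj_linepath[OF ints(1)[OF f]] cnj_linepath[OF ints(2)[OF f]]
      cnj_linepath[OF ints(3)[OF f]] cnj_linepath[OF ints(4)[OF f]] c by simp
  also have "\<dots> = - contour_integral (rect_contour \<eta>) f'"
    unfolding split[OF f'] rev[of a4 a3] rev[of a3 a2] rev[of a2 a1] rev[of a1 a4] by simp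
  finally show ?thesis unfolding f'_def .
qed


lemma norm_smult_vec: "norm (z *s u) = cmod z * norm (u::complex^'n)"
  unfolding norm_vec_def by (simp add: norm_mult L2_set_right_distrib)

lemma norm_axis_c: "norm (axis m (1::complex) :: complex^'n) = 1"
proof -
  have "(\<lambda>i. (norm ((axis m (1::complex) :: complex^'n) $ i))\<^sup>2) = (\<lambda>i. if i = m then 1 else 0)"
    by (auto simp: axis_def)
  then have "(\<Sum>i\<in>UNIV. (norm ((axis m (1::complex) :: complex^'n) $ i))\<^sup>2) = (\<Sum>i\<in>UNIV. if i = m then (1::real) else 0)"
    by (rule arg_cong[where f="\<lambda>f. sum f UNIV"])
  then show ?thesis unfolding norm_vec_def L2_set_def by simp
qed

lemma mv_axis: "(P *v axis m (1::'a::comm_ring_1)) $ k = P $ k $ m"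
proof -
  have "(P *v axis m 1) $ k = (\<Sum>l\<in>UNIV. P$k$l * (if l = m then 1 else 0))"
    by (simp add: matrix_vector_mult_def axis_def)
  also have "\<dots> = P $ k $ m" by (rule sum_delta_r[where w=1, simplified])
  finally show ?thesis .
qed

lemma resolvent_bound:
  fixes M :: "real^'n^'n"
  assumes inv: "invertible (cmat M - mat z)" and zK: "cmod z > onorm ((*v) (cmat M))"
  shows "cmod (resolvent M z $ k $ m) \<le> 1 / (cmod z - onorm ((*v) (cmat M)))"
proof -
  define K where "K = onorm ((*v) (cmat M))"
  define u where "u = resolvent M z *v axis m 1"
  have "(cmat M - mat z) *v u = axis m 1"
    unfolding u_def resolvent_alt by (simp add: matrix_vector_mul_assoc matrix_inv_props[OF inv])
  then have e: "cmat M *v u - z *s u = axis m 1" by (simp add: mat_minus_mult)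
  have bl: "bounded_linear ((*v) (cmat M))" by simp
  have nK: "norm (cmat M *v u) \<le> K * norm u" unfolding K_def by (rule onorm[OF bl])
  have "1 = norm (cmat M *v u - z *s u)" unfolding e by (simp add: norm_axis_c)
  also have "\<dots> \<ge> norm (z *s u) - norm (cmat M *v u)"
    by (metis norm_minus_commute norm_triangle_ineq2)
  finally have "cmod z * norm u - K * norm u \<le> 1" using nK unfolding norm_smult_vec by linarith
  then have "(cmod z - K) * norm u \<le> 1" by (simp add: left_diff_distrib)
  moreover have "cmod z - K > 0" using zK K_def by simp
  ultimately have "norm u \<le> 1 / (cmod z - K)" by (simp add: field_simps)
  moreover have "cmod (u $ k) \<le> norm u" by (rule Finite_Cartesian_Product.norm_nth_le)
  moreover have "u $ k = resolvent M z $ k $ m" unfolding u_def by (rule mv_axis)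
  ultimately show ?thesis unfolding K_def by simp
qed

lemma vanish_lemma:
  fixes x C K R0 :: real
  assumes "0 \<le> x" "R0 \<ge> K" "\<And>R. R > R0 \<Longrightarrow> x \<le> C / (R - K)"
  shows "x = 0"
proof (rule ccontr)
  assume "x \<noteq> 0"
  then have x: "x > 0" using assms(1) by simp
  have "x \<le> C / ((R0 + 1) - K)" using assms(3)[of "R0 + 1"] by simp
  then have C: "C > 0" using x assms(2)
    by (smt (verit, ccfv_SIG) divide_nonpos_pos)
  define R where "R = R0 + 1 + C / x"
  have "R > R0" unfolding R_def using C x by (smt (verit) divide_pos_pos)
  then have "x \<le> C / (R - K)" by (rule assms(3))
  moreover have "R - K > C / x" unfolding R_def using assms(2) by simp
  then have "C / (R - K) < x"
    using C x by (smt (verit, best) divide_less_eq mult.commute pos_divide_less_eq divide_pos_pos)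
  ultimately show False by simp
qed


lemma resolvent_integral:
  fixes A :: "real^'n^'n"
  assumes sym: "symmetric_mat A" and nA: "spec_norm A < 3" and eta: "\<eta> > 0"
  shows "contour_integral (rect_contour \<eta>) (\<lambda>z. resolvent A z $ i $ m) = - 2 * pi * \<i> * (if i = m then 1 else 0)"
proof -
  define S where "S = {z. \<not> invertible (cmat A - mat z)}"
  have fin: "finite S" unfolding S_def by (rule sing_finite[OF sym])
  have Sp: "Im p = 0" "\<bar>Re p\<bar> \<le> spec_norm A" if "p \<in> S" for p
    using sing_real[OF sym] that unfolding S_def by auto
  have Sn: "cmod p \<le> spec_norm A" if "p \<in> S" for p
    using Sp[OF that] by (simp add: cmod_def)
  have holo: "(\<lambda>z. resolvent A z $ k $ l) holomorphic_on UNIV - S" for k l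
    by (rule resolvent_holo[where g="\<lambda>z. z"]) (auto simp: S_def)
  define f where "f = (\<lambda>z. resolvent A z $ i $ m)"
  have holof: "f holomorphic_on UNIV - S" unfolding f_def by (rule holo)
  define K where "K = onorm ((*v) (cmat A))"
  have K0: "K \<ge> 0" unfolding K_def by (rule onorm_pos_le) simp
  have sn0: "spec_norm A \<ge> 0" unfolding spec_norm_def by (rule onorm_pos_le) simp
  define R0 where "R0 = max (spec_norm A) K + 1"
  have imgG: "path_image (rect_contour \<eta>) \<subseteq> UNIV - S"
  proof
    fix z assume z: "z \<in> path_image (rect_contour \<eta>)"
    show "z \<in> UNIV - S"
    proof (rule DiffI[OF UNIV_I], rule notI)
      assume "z \<in> S"
      with Sp have "Im z = 0" "\<bar>Re z\<bar> \<le> spec_norm A" by auto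
      with rect_image_props(3)[OF eta z] nA eta show False by auto
    qed
  qed
  have RG: "contour_integral (rect_contour \<eta>) f = 2 * pi * \<i> * (\<Sum>p\<in>S. winding_number (rect_contour \<eta>) p * residue f p)"
    using Residue_theorem[OF open_UNIV connected_UNIV fin holof rect_valid rect_closed imgG] by simp
  have wG: "winding_number (rect_contour \<eta>) p = 1" if "p \<in> S" for p
    using Sp[OF that] nA by (intro rect_winding[OF eta]) auto
  have RG': "contour_integral (rect_contour \<eta>) f = 2 * pi * \<i> * (\<Sum>p\<in>S. residue f p)"
    unfolding RG using wG by simp
  have RC: "contour_integral (circlepath 0 R) f = 2 * pi * \<i> * (\<Sum>p\<in>S. residue f p)" if R: "R > spec_norm A" for R
  proof -
    have img: "path_image (circlepath 0 R) \<subseteq> UNIV - S"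
      using Sn R sn0 by (auto simp: dist_norm) (metis linorder_not_le)
    have "contour_integral (circlepath 0 R) f = 2 * pi * \<i> * (\<Sum>p\<in>S. winding_number (circlepath 0 R) p * residue f p)"
      using Residue_theorem[OF open_UNIV connected_UNIV fin holof valid_path_circlepath _ img] by simp
    moreover have "winding_number (circlepath 0 R) p = 1" if "p \<in> S" for p
      using Sn[OF that] R by (intro winding_number_circlepath) auto
    ultimately show ?thesis by simp
  qed
  define g where "g k = (\<lambda>z. resolvent A z $ k $ m / z)" for k
  have bound: "norm (contour_integral (rect_contour \<eta>) f + 2 * pi * \<i> * (if i = m then 1 else 0))
      \<le> (\<Sum>k\<in>UNIV. \<bar>A$i$k\<bar> * (2 * pi)) / (R - K)" if R: "R > R0" for R
  proof -
    have R1: "R > spec_norm A" "R > K" "R > 0" using R K0 sn0 unfolding R0_def by auto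
    have notS: "z \<notin> S" if "cmod z = R" for z using Sn R1 that by force
    have z0: "z \<noteq> 0" if "cmod z = R" for z using R1 that by auto
    have openT: "open (UNIV - (S \<union> {0}))" using fin by (intro open_Diff finite_imp_closed) auto
    have imgC: "path_image (circlepath 0 R) \<subseteq> UNIV - (S \<union> {0})"
      using notS z0 R1 by (auto simp: dist_norm)
    have gi: "g k contour_integrable_on circlepath 0 R" for k
      unfolding g_def
      by (rule contour_integrable_holomorphic_simple[OF _ openT valid_path_circlepath imgC])
         (intro holomorphic_intros holomorphic_on_subset[OF holo], auto)
    have ii: "(\<lambda>z. 1 / z) contour_integrable_on circlepath 0 R"
      by (rule contour_integrable_holomorphic_simple[OF _ openT valid_path_circlepath imgC])
         (intro holomorphic_intros, auto)
    have pw: "f z = (\<Sum>k\<in>UNIV. of_real (A$i$k) * g k z) - (if i = m then 1 else 0) * (1 / z)"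
      if "z \<in> path_image (circlepath 0 R)" for z
    proof -
      have zR: "cmod z = R" using that R1 by (simp add: dist_norm)
      have inv: "invertible (cmat A - mat z)" using notS[OF zR] unfolding S_def by simp
      have z: "z \<noteq> 0" by (rule z0[OF zR])
      have "(\<Sum>k\<in>UNIV. of_real (A$i$k) * g k z) = (\<Sum>k\<in>UNIV. of_real (A$i$k) * resolvent A z $ k $ m) / z"
        unfolding g_def by (simp add: sum_divide_distrib)
      also have "\<dots> = ((if i = m then 1 else 0) + z * f z) / z"
        unfolding resolvent_eqs(1)[OF inv] f_def ..
      finally show ?thesis using z by (simp add: field_simps)
    qed
    have "contour_integral (circlepath 0 R) f =
        contour_integral (circlepath 0 R) (\<lambda>z. (\<Sum>k\<in>UNIV. of_real (A$i$k) * g k z) - (if i = m then 1 else 0) * (1 / z))"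
      by (rule contour_integral_eq) (rule pw)
    also have "\<dots> = (\<Sum>k\<in>UNIV. of_real (A$i$k) * contour_integral (circlepath 0 R) (g k)) -
         (if i = m then 1 else 0) * contour_integral (circlepath 0 R) (\<lambda>z. 1 / z)"
      using gi ii
      by (simp add: contour_integral_diff contour_integral_sum contour_integral_lmul
            contour_integrable_lmul contour_integrable_sum)
    also have "contour_integral (circlepath 0 R) (\<lambda>z. 1 / z) = 2 * pi * \<i>"
      using contour_integral_circlepath[OF R1(3), of 0] by simp
    finally have e: "contour_integral (rect_contour \<eta>) f + 2 * pi * \<i> * (if i = m then 1 else 0) =
        (\<Sum>k\<in>UNIV. of_real (A$i$k) * contour_integral (circlepath 0 R) (g k))"
      using RG' RC[OF R1(1)] by (simp add: algebra_simps)
    have gb: "norm (contour_integral (circlepath 0 R) (g k)) \<le> 2 * pi / (R - K)" for k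
    proof -
      have "norm (contour_integral (circlepath 0 R) (g k)) \<le> (1 / ((R - K) * R)) * (2 * pi * R)"
      proof (rule has_contour_integral_bound_circlepath[OF has_contour_integral_integral[OF gi]])
        show "0 \<le> 1 / ((R - K) * R)" using R1 by simp
        show "0 < R" by (rule R1)
        fix x :: complex assume "norm (x - 0) = R"
        then have x: "cmod x = R" by simp
        have inv: "invertible (cmat A - mat x)" using notS[OF x] unfolding S_def by simp
        have b: "cmod (resolvent A x $ k $ m) \<le> 1 / (R - K)"
          using resolvent_bound[OF inv] x R1 unfolding K_def by simp
        have "norm (g k x) = cmod (resolvent A x $ k $ m) / R" unfolding g_def using x by (simp add: norm_divide)
        also have "\<dots> \<le> (1 / (R - K)) / R" by (rule divide_right_mono[OF b]) (use R1 in linarith)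
        also have "\<dots> = 1 / ((R - K) * R)" by simp
        finally show "norm (g k x) \<le> 1 / ((R - K) * R)" .
      qed
      also have "\<dots> = 2 * pi / (R - K)" using R1 by (simp add: field_simps)
      finally show ?thesis .
    qed
    have "norm (\<Sum>k\<in>UNIV. of_real (A$i$k) * contour_integral (circlepath 0 R) (g k))
        \<le> (\<Sum>k\<in>UNIV. \<bar>A$i$k\<bar> * (2 * pi / (R - K)))"
    proof (rule order_trans[OF norm_sum sum_mono])
      fix k
      have "\<bar>A$i$k\<bar> * norm (contour_integral (circlepath 0 R) (g k)) \<le> \<bar>A$i$k\<bar> * (2 * pi / (R - K))"
        by (rule mult_left_mono[OF gb]) simp
      then show "norm (of_real (A$i$k) * contour_integral (circlepath 0 R) (g k)) \<le> \<bar>A$i$k\<bar> * (2 * pi / (R - K))"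
        by (simp add: norm_mult)
    qed
    also have "\<dots> = (\<Sum>k\<in>UNIV. \<bar>A$i$k\<bar> * (2 * pi)) / (R - K)"
      by (simp add: sum_divide_distrib)
    finally show ?thesis unfolding e .
  qed
  have "norm (contour_integral (rect_contour \<eta>) f + 2 * pi * \<i> * (if i = m then 1 else 0)) = 0"
    by (rule vanish_lemma[of _ K R0 _, OF norm_ge_zero _ bound]) (auto simp: R0_def)
  then show ?thesis unfolding f_def by (simp add: add_eq_0_iff)
qed


definition strip :: "real \<Rightarrow> complex set" where
  "strip \<eta> = {z. - \<eta> < Im z \<and> Im z < \<eta>}"

lemma strip_open: "open (strip \<eta>)"
  unfolding strip_def by (simp add: open_Collect_conj open_halfspace_Im_gt open_halfspace_Im_lt)

lemma strip_convex: "convex (strip \<eta>)"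
proof -
  have "strip \<eta> = {z. Im z > - \<eta>} \<inter> {z. Im z < \<eta>}" unfolding strip_def by auto
  then show ?thesis by (simp add: convex_Int convex_halfspace_Im_gt convex_halfspace_Im_lt)
qed

lemma rect_in_strip: "\<eta> > 0 \<Longrightarrow> path_image (rect_contour \<eta>) \<subseteq> strip \<eta>"
  using rect_image_props(1) unfolding strip_def by fastforce

lemma inv_plus:
  fixes B :: "real^'n^'n"
  assumes "symmetric_mat B" "z \<in> strip \<eta>"
  shows "invertible (cmat B - mat (z + \<i> * of_real \<eta>))" "invertible (cmat B - mat (z - \<i> * of_real \<eta>))"
  using assms invertible_shift[OF assms(1)] unfolding strip_def by auto

definition sB :: "real^'n^'n \<Rightarrow> complex \<Rightarrow> complex" where
  "sB B w = (\<Sum>i\<in>UNIV. (resolvent B w *v onesv) $ i)"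

lemma sB_alt: "sB B w = (\<Sum>i\<in>UNIV. \<Sum>j\<in>UNIV. resolvent B w $ i $ j)"
  unfolding sB_def by (simp add: matrix_vector_mult_def onesv_def)

lemma Ffun_alt: "Ffun B \<eta> z = 2 * \<i> / (sB B (z + \<i> * of_real \<eta>) - sB B (z - \<i> * of_real \<eta>))"
  unfolding Ffun_def sB_def ..

lemma sB_holo:
  fixes B :: "real^'n^'n"
  assumes "g holomorphic_on S" "\<And>z. z \<in> S \<Longrightarrow> invertible (cmat B - mat (g z))"
  shows "(\<lambda>z. sB B (g z)) holomorphic_on S"
  unfolding sB_alt by (intro holomorphic_on_sum resolvent_holo assms)

lemma denom_nz:
  fixes B :: "real^'n^'n"
  assumes sym: "symmetric_mat B" and z: "z \<in> strip \<eta>"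
  shows "Im (sB B (z + \<i> * of_real \<eta>) - sB B (z - \<i> * of_real \<eta>)) > 0"
proof -
  have p: "Im (z + \<i> * of_real \<eta>) > 0" and m: "Im (z - \<i> * of_real \<eta>) < 0"
    using z unfolding strip_def by auto
  have "Im (sB B (z + \<i> * of_real \<eta>)) > 0"
    using Im_s_sign[OF sym, of "z + \<i> * of_real \<eta>"] p unfolding sB_def by simp
  moreover have "Im (sB B (z - \<i> * of_real \<eta>)) < 0"
    using Im_s_sign[OF sym, of "z - \<i> * of_real \<eta>"] m unfolding sB_def
    by (simp add: mult_neg_pos)
  ultimately show ?thesis by simp
qed

lemma Ffun_holo:
  fixes B :: "real^'n^'n"
  assumes sym: "symmetric_mat B"
  shows "(\<lambda>z. Ffun B \<eta> z) holomorphic_on strip \<eta>"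
  unfolding Ffun_alt
proof (intro holomorphic_intros sB_holo)
  show "\<And>z. z \<in> strip \<eta> \<Longrightarrow> invertible (cmat B - mat (z + \<i> * of_real \<eta>))"
    "\<And>z. z \<in> strip \<eta> \<Longrightarrow> invertible (cmat B - mat (z - \<i> * of_real \<eta>))"
    using inv_plus[OF sym] by auto
  show "\<And>z. z \<in> strip \<eta> \<Longrightarrow> sB B (z + \<i> * of_real \<eta>) - sB B (z - \<i> * of_real \<eta>) \<noteq> 0"
    using denom_nz[OF sym] by (metis zero_complex.sel(2) less_irrefl)
qed

lemma Ffun_mult:
  fixes B :: "real^'n^'n"
  assumes sym: "symmetric_mat B" and z: "z \<in> strip \<eta>"
  shows "Ffun B \<eta> z * (sB B (z + \<i> * of_real \<eta>) - sB B (z - \<i> * of_real \<eta>)) = 2 * \<i>"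
proof -
  have "sB B (z + \<i> * of_real \<eta>) - sB B (z - \<i> * of_real \<eta>) \<noteq> 0"
    using denom_nz[OF sym z] by (metis zero_complex.sel(2) less_irrefl)
  then show ?thesis unfolding Ffun_alt by simp
qed

lemma cauchy_q:
  fixes B :: "real^'n^'n"
  assumes sym: "symmetric_mat B" and eta: "\<eta> > 0"
  shows "contour_integral (rect_contour \<eta>) (\<lambda>z. Ffun B \<eta> z * (\<Sum>l\<in>UNIV. resolvent B (z + \<i> * of_real \<eta>) $ l $ j)) = 0"
proof -
  have "(\<lambda>z. Ffun B \<eta> z * (\<Sum>l\<in>UNIV. resolvent B (z + \<i> * of_real \<eta>) $ l $ j)) holomorphic_on strip \<eta>"
    by (intro holomorphic_on_mult Ffun_holo[OF sym] holomorphic_on_sum resolvent_holo holomorphic_intros)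
       (use inv_plus[OF sym] in auto)
  from Cauchy_theorem_convex_simple[OF this strip_convex rect_valid rect_in_strip[OF eta] rect_closed]
  show ?thesis by (rule contour_integral_unique)
qed


lemma inner_mat: "inner M N = (\<Sum>i\<in>UNIV. \<Sum>j\<in>UNIV. M$i$j * N$i$j)" for M N :: "real^'n^'m"
  by (simp add: inner_vec_def)

lemma frob_inner: "frob_sq M = inner M M"
  unfolding frob_sq_def inner_mat by (simp add: power2_eq_square)

lemma adj_left:
  fixes Z A D :: "real^'n^'n"
  shows "inner Z (A ** D) = inner (transpose A ** Z) D"
proof -
  have "inner Z (A ** D) = (\<Sum>i\<in>UNIV. \<Sum>j\<in>UNIV. \<Sum>k\<in>UNIV. Z$i$j * A$i$k * D$k$j)"
    by (simp add: inner_mat matrix_matrix_mult_def sum_distrib_left mult.assoc)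
  also have "\<dots> = (\<Sum>i\<in>UNIV. \<Sum>k\<in>UNIV. \<Sum>j\<in>UNIV. Z$i$j * A$i$k * D$k$j)"
    by (rule sum.cong[OF refl], rule sum.swap)
  also have "\<dots> = (\<Sum>k\<in>UNIV. \<Sum>i\<in>UNIV. \<Sum>j\<in>UNIV. Z$i$j * A$i$k * D$k$j)"
    by (rule sum.swap)
  also have "\<dots> = (\<Sum>k\<in>UNIV. \<Sum>j\<in>UNIV. \<Sum>i\<in>UNIV. Z$i$j * A$i$k * D$k$j)"
    by (rule sum.cong[OF refl], rule sum.swap)
  also have "\<dots> = inner (transpose A ** Z) D"
    by (simp add: inner_mat matrix_matrix_mult_def transpose_def sum_distrib_left sum_distrib_right mult_ac)
  finally show ?thesis .
qed

lemma adj_right: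
  fixes Z B D :: "real^'n^'n"
  shows "inner Z (D ** B) = inner (Z ** transpose B) D"
proof -
  have "inner Z (D ** B) = (\<Sum>i\<in>UNIV. \<Sum>j\<in>UNIV. \<Sum>k\<in>UNIV. Z$i$j * D$i$k * B$k$j)"
    by (simp add: inner_mat matrix_matrix_mult_def sum_distrib_left mult.assoc)
  also have "\<dots> = (\<Sum>i\<in>UNIV. \<Sum>k\<in>UNIV. \<Sum>j\<in>UNIV. Z$i$j * D$i$k * B$k$j)"
    by (rule sum.cong[OF refl], rule sum.swap)
  also have "\<dots> = inner (Z ** transpose B) D"
    by (simp add: inner_mat matrix_matrix_mult_def transpose_def sum_distrib_left sum_distrib_right mult_ac)
  finally show ?thesis .
qed

lemma matrix_add_rdistrib': "((B + C) ** A) = (B ** A) + (C ** A)" for A B C :: "'a::semiring_1^'n^'n"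
  by (simp add: matrix_matrix_mult_def vec_eq_iff distrib_right sum.distrib)

lemma opt_unique:
  fixes A B X Y Z :: "real^'n^'n" and c :: "real^'n" and \<eta> :: real
  assumes symA: "symmetric_mat A" and symB: "symmetric_mat B" and eta: "\<eta> > 0"
    and Y1: "Y *v onesv = onesv"
    and e1: "A ** Y - Y ** B = \<eta> *\<^sub>R Z"
    and e2: "A ** Z - Z ** B + \<eta> *\<^sub>R Y = (\<chi> i j. c$i)"
    and sol: "is_solution A B \<eta> X"
  shows "X = Y"
proof -
  define D where "D = X - Y"
  have X1: "X *v onesv = onesv" and opt: "objective A B \<eta> X \<le> objective A B \<eta> Y"
    using sol Y1 unfolding is_solution_def by auto
  have D1: "D *v onesv = 0" unfolding D_def using X1 Y1 by (simp add: matrix_vector_mult_diff_rdistrib)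
  have X: "X = Y + D" unfolding D_def by simp
  define S where "S M = A ** M - M ** B" for M :: "real^'n^'n"
  have SX: "S X = S Y + S D" unfolding X S_def by (simp add: matrix_add_ldistrib matrix_add_rdistrib')
  have obj: "objective A B \<eta> M = inner (S M) (S M) + \<eta>\<^sup>2 * inner M M" for M
    unfolding objective_def S_def frob_inner ..
  have tA: "transpose A = A" and tB: "transpose B = B" using symA symB unfolding symmetric_mat_def by auto
  have CD: "inner (\<chi> i j. c$i) D = 0"
  proof -
    have "inner (\<chi> i j. c$i) D = (\<Sum>i\<in>UNIV. c$i * (D *v onesv)$i)"
      by (simp add: inner_mat matrix_vector_mult_def onesv_def sum_distrib_left)
    then show ?thesis using D1 by simp
  qed
  have cross: "inner (S Y) (S D) + \<eta>\<^sup>2 * inner Y D = 0"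
  proof -
    have "inner (S Y) (S D) = \<eta> * (inner Z (A ** D) - inner Z (D ** B))"
      unfolding S_def e1 by (simp add: inner_diff_right right_diff_distrib)
    also have "\<dots> = \<eta> * inner (A ** Z - Z ** B) D"
      unfolding adj_left[of Z A D] adj_right[of Z D B] tA tB by (simp add: inner_diff_left)
    also have "A ** Z - Z ** B = (\<chi> i j. c$i) - \<eta> *\<^sub>R Y" using e2 by (simp add: eq_diff_eq)
    finally have "inner (S Y) (S D) = \<eta> * (inner (\<chi> i j. c$i) D - \<eta> * inner Y D)"
      by (simp add: inner_diff_left)
    then show ?thesis using CD by (simp add: power2_eq_square algebra_simps)
  qed
  have "objective A B \<eta> X = objective A B \<eta> Y + objective A B \<eta> D
      + 2 * (inner (S Y) (S D) + \<eta>\<^sup>2 * inner Y D)"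
    unfolding obj SX unfolding X by (simp add: inner_add_left inner_add_right inner_commute algebra_simps)
  then have "objective A B \<eta> D \<le> 0" using opt cross by simp
  moreover have "objective A B \<eta> D \<ge> \<eta>\<^sup>2 * inner D D" unfolding obj by simp
  ultimately have "\<eta>\<^sup>2 * inner D D \<le> 0" by linarith
  then have "inner D D \<le> 0" using eta by (simp add: mult_le_0_iff)
  then have "inner D D = 0" using inner_ge_zero[of D] by linarith
  then have "D = 0" by simp
  then show ?thesis unfolding D_def by simp
qed


lemma RJR_entry:
  fixes P Q :: "complex^'n^'n"
  shows "(P ** onesJ ** Q) $ i $ j = (\<Sum>m\<in>UNIV. P$i$m) * (\<Sum>l\<in>UNIV. Q$l$j)"
  by (simp add: matrix_matrix_mult_def onesJ_def sum_distrib_left sum_distrib_right)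

lemma sum_factor_l: "(\<Sum>k\<in>S. a k * (F * (p k * q))) = F * q * (\<Sum>k\<in>S. a k * p k)"
  for a p :: "'b \<Rightarrow> complex"
  by (simp add: sum_distrib_left mult_ac)

lemma sum_factor_r: "(\<Sum>k\<in>S. (F * (p * q k)) * b k) = F * p * (\<Sum>k\<in>S. q k * b k)"
  for b q :: "'b \<Rightarrow> complex"
  by (simp add: sum_distrib_left mult_ac)

theorem lemma6p2:
  fixes A B X :: "real^'n^'n" and \<eta> :: real
  assumes "symmetric_mat A" and "symmetric_mat B"
    and "spec_norm A \<le> 2.5"
    and "\<eta> > 0"
    and "is_solution A B \<eta> X"
  shows "X = (\<chi> i j. Re (contour_integral (rect_contour \<eta>)
              (\<lambda>z. (Ffun B \<eta> z * ((resolvent A z ** onesJ ** resolvent B (z + \<i> * of_real \<eta>)) $ i $ j)))) / (2 * pi))"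
proof -
  note symA = assms(1) and symB = assms(2) and nA = assms(3) and eta = assms(4) and sol = assms(5)
  define \<Gamma> where "\<Gamma> = rect_contour \<eta>"
  define SA where "SA = {z. \<not> invertible (cmat A - mat z)}"
  define U where "U = strip \<eta> - SA"
  have finSA: "finite SA" unfolding SA_def by (rule sing_finite[OF symA])
  have SAp: "Im p = 0" "\<bar>Re p\<bar> \<le> spec_norm A" if "p \<in> SA" for p
    using sing_real[OF symA] that unfolding SA_def by auto
  have openU: "open U" unfolding U_def using finSA by (intro open_Diff strip_open finite_imp_closed)
  have imgU: "path_image \<Gamma> \<subseteq> U"
  proof
    fix z assume z: "z \<in> path_image \<Gamma>"
    have "z \<in> strip \<eta>" using rect_in_strip[OF eta] z unfolding \<Gamma>_def by blast
    moreover have "z \<notin> SA"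
    proof
      assume "z \<in> SA"
      with SAp have "Im z = 0" "\<bar>Re z\<bar> \<le> spec_norm A" by auto
      with rect_image_props(3)[OF eta z[unfolded \<Gamma>_def]] nA eta show False by auto
    qed
    ultimately show "z \<in> U" unfolding U_def by blast
  qed
  have cnjG: "cnj z \<in> path_image \<Gamma>" if "z \<in> path_image \<Gamma>" for z
    using rect_image_props(4)[OF eta] that unfolding \<Gamma>_def by blast
  have integ: "h contour_integrable_on \<Gamma>" if "h holomorphic_on U" for h
    by (rule contour_integrable_holomorphic_simple[OF that openU _ imgU]) (simp add: \<Gamma>_def rect_valid)
  have U_strip: "U \<subseteq> strip \<eta>" unfolding U_def by blast
  have invA: "invertible (cmat A - mat z)" if "z \<in> U" for z using that unfolding U_def SA_def by blast
  have invBp: "invertible (cmat B - mat (z + \<i> * of_real \<eta>))" if "z \<in> U" for z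
    using inv_plus[OF symB] U_strip that by blast
  have invBm: "invertible (cmat B - mat (z - \<i> * of_real \<eta>))" if "z \<in> U" for z
    using inv_plus[OF symB] U_strip that by blast
  define p where "p i z = (\<Sum>m\<in>UNIV. resolvent A z $ i $ m)" for i z
  define q where "q j z = (\<Sum>l\<in>UNIV. resolvent B (z + \<i> * of_real \<eta>) $ l $ j)" for j z
  define q' where "q' j z = (\<Sum>l\<in>UNIV. resolvent B (z - \<i> * of_real \<eta>) $ l $ j)" for j z
  define Ff where "Ff z = Ffun B \<eta> z" for z
  define G where "G i j z = Ffun B \<eta> z * ((resolvent A z ** onesJ ** resolvent B (z + \<i> * of_real \<eta>)) $ i $ j)" for i j z
  have Gf: "G i j z = Ff z * (p i z * q j z)" for i j z
    unfolding G_def Ff_def p_def q_def RJR_entry ..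
  have hp: "p i holomorphic_on U" for i
    unfolding p_def by (intro holomorphic_on_sum resolvent_holo[where g="\<lambda>z. z"] holomorphic_intros invA) 
  have hq: "q j holomorphic_on U" for j
    unfolding q_def by (intro holomorphic_on_sum resolvent_holo holomorphic_intros invBp)
  have hq': "q' j holomorphic_on U" for j
    unfolding q'_def by (intro holomorphic_on_sum resolvent_holo holomorphic_intros invBm)
  have hF: "Ff holomorphic_on U"
    unfolding Ff_def using Ffun_holo[OF symB, of \<eta>] U_strip by (rule holomorphic_on_subset)
  have iG: "G i j contour_integrable_on \<Gamma>" for i j
    unfolding Gf[abs_def] by (intro integ holomorphic_intros hF hp hq)
  define Mint where "Mint i j = contour_integral \<Gamma> (G i j)" for i j
  define N where "N i = contour_integral \<Gamma> (\<lambda>z. Ff z * p i z)" for i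
  have F1: "(\<Sum>k\<in>UNIV. of_real (A$i$k) * G k j z) - (\<Sum>k\<in>UNIV. G i k z * of_real (B$k$j)) + \<i> * of_real \<eta> * G i j z
       = Ff z * q j z - Ff z * p i z" if z: "z \<in> U" for i j z
  proof -
    have Ap: "(\<Sum>k\<in>UNIV. of_real (A$i$k) * p k z) = 1 + z * p i z"
    proof -
      have "(\<Sum>k\<in>UNIV. of_real (A$i$k) * p k z) = (\<Sum>k\<in>UNIV. \<Sum>m\<in>UNIV. of_real (A$i$k) * resolvent A z $ k $ m)"
        unfolding p_def by (simp add: sum_distrib_left)
      also have "\<dots> = (\<Sum>m\<in>UNIV. \<Sum>k\<in>UNIV. of_real (A$i$k) * resolvent A z $ k $ m)"
        by (rule sum.swap)
      also have "\<dots> = (\<Sum>m\<in>UNIV. (if i = m then 1 else 0) + z * resolvent A z $ i $ m)"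
        by (simp add: resolvent_eqs(1)[OF invA[OF z]])
      also have "\<dots> = 1 + z * p i z" by (simp add: sum.distrib p_def sum_distrib_left)
      finally show ?thesis .
    qed
    have qB: "(\<Sum>k\<in>UNIV. q k z * of_real (B$k$j)) = 1 + (z + \<i> * of_real \<eta>) * q j z"
    proof -
      have "(\<Sum>k\<in>UNIV. q k z * of_real (B$k$j)) =
          (\<Sum>k\<in>UNIV. \<Sum>l\<in>UNIV. resolvent B (z + \<i> * of_real \<eta>) $ l $ k * of_real (B$k$j))"
        unfolding q_def by (simp add: sum_distrib_right)
      also have "\<dots> = (\<Sum>l\<in>UNIV. \<Sum>k\<in>UNIV. resolvent B (z + \<i> * of_real \<eta>) $ l $ k * of_real (B$k$j))"
        by (rule sum.swap)
      also have "\<dots> = (\<Sum>l\<in>UNIV. (if l = j then 1 else 0) + (z + \<i> * of_real \<eta>) * resolvent B (z + \<i> * of_real \<eta>) $ l $ j)"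
        by (simp add: resolvent_eqs(2)[OF invBp[OF z]])
      also have "\<dots> = 1 + (z + \<i> * of_real \<eta>) * q j z" by (simp add: sum.distrib q_def sum_distrib_left)
      finally show ?thesis .
    qed
    have "(\<Sum>k\<in>UNIV. of_real (A$i$k) * G k j z) = Ff z * q j z * (1 + z * p i z)"
      unfolding Gf sum_factor_l Ap ..
    moreover have "(\<Sum>k\<in>UNIV. G i k z * of_real (B$k$j)) = Ff z * p i z * (1 + (z + \<i> * of_real \<eta>) * q j z)"
      unfolding Gf sum_factor_r qB ..
    ultimately show ?thesis unfolding Gf by (simp add: algebra_simps)
  qed
  have F2: "(\<Sum>k\<in>UNIV. of_real (A$i$k) * Mint k j) - (\<Sum>k\<in>UNIV. Mint i k * of_real (B$k$j)) + \<i> * of_real \<eta> * Mint i j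
       = - N i" for i j
  proof -
    have "(\<Sum>k\<in>UNIV. of_real (A$i$k) * Mint k j) - (\<Sum>k\<in>UNIV. Mint i k * of_real (B$k$j)) + \<i> * of_real \<eta> * Mint i j
       = contour_integral \<Gamma> (\<lambda>z. (\<Sum>k\<in>UNIV. of_real (A$i$k) * G k j z) - (\<Sum>k\<in>UNIV. G i k z * of_real (B$k$j)) + \<i> * of_real \<eta> * G i j z)"
      unfolding Mint_def using iG
      by (simp add: contour_integral_add contour_integral_diff contour_integral_sum contour_integral_lmul
          contour_integral_rmul contour_integrable_add contour_integrable_diff contour_integrable_sum
          contour_integrable_lmul contour_integrable_rmul)
    also have "\<dots> = contour_integral \<Gamma> (\<lambda>z. Ff z * q j z - Ff z * p i z)"
      by (rule contour_integral_eq) (use F1 imgU in blast)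
    also have "\<dots> = contour_integral \<Gamma> (\<lambda>z. Ff z * q j z) - N i"
      unfolding N_def by (rule contour_integral_diff) (intro integ holomorphic_intros hF hp hq)+
    also have "contour_integral \<Gamma> (\<lambda>z. Ff z * q j z) = 0"
      unfolding \<Gamma>_def Ff_def q_def by (rule cauchy_q[OF symB eta])
    finally show ?thesis by simp
  qed
  have cRA: "cnj (resolvent A (cnj z) $ i $ m) = resolvent A z $ i $ m" if "z \<in> path_image \<Gamma>" for z i m
  proof -
    have "cnj z \<in> U" using cnjG[OF that] imgU by blast
    from cnj_resolvent[OF invA[OF this]] show ?thesis by simp
  qed
  have cRBp: "cnj (resolvent B (cnj z + \<i> * of_real \<eta>) $ l $ j) = resolvent B (z - \<i> * of_real \<eta>) $ l $ j"
    if "z \<in> path_image \<Gamma>" for z l j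
  proof -
    have "cnj z \<in> U" using cnjG[OF that] imgU by blast
    from cnj_resolvent[OF invBp[OF this]] show ?thesis by simp
  qed
  have cRBm: "cnj (resolvent B (cnj z - \<i> * of_real \<eta>) $ l $ j) = resolvent B (z + \<i> * of_real \<eta>) $ l $ j"
    if "z \<in> path_image \<Gamma>" for z l j
  proof -
    have "cnj z \<in> U" using cnjG[OF that] imgU by blast
    from cnj_resolvent[OF invBm[OF this]] show ?thesis by simp
  qed
  have cp: "cnj (p i (cnj z)) = p i z" if "z \<in> path_image \<Gamma>" for z i
    unfolding p_def using cRA[OF that] by simp
  have cq: "cnj (q j (cnj z)) = q' j z" if "z \<in> path_image \<Gamma>" for z j
    unfolding q_def q'_def using cRBp[OF that] by simp
  have cF: "cnj (Ff (cnj z)) = Ff z" if "z \<in> path_image \<Gamma>" for z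
  proof -
    have "cnj (sB B (cnj z + \<i> * of_real \<eta>)) = sB B (z - \<i> * of_real \<eta>)"
      unfolding sB_alt using cRBp[OF that] by simp
    moreover have "cnj (sB B (cnj z - \<i> * of_real \<eta>)) = sB B (z + \<i> * of_real \<eta>)"
      unfolding sB_alt using cRBm[OF that] by simp
    ultimately have "cnj (Ff (cnj z)) = - (2 * \<i> / (sB B (z - \<i> * of_real \<eta>) - sB B (z + \<i> * of_real \<eta>)))"
      unfolding Ff_def Ffun_alt by simp
    also have "\<dots> = Ff z" unfolding Ff_def Ffun_alt by (simp only: minus_divide_right minus_diff_eq)
    finally show ?thesis .
  qed
  have cnj_int: "cnj (contour_integral \<Gamma> f) = - contour_integral \<Gamma> h"
    if fi: "f contour_integrable_on \<Gamma>" and hi: "h contour_integrable_on \<Gamma>"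
      and fh: "\<And>z. z \<in> path_image \<Gamma> \<Longrightarrow> cnj (f (cnj z)) = h z" for f h
  proof -
    have "(\<lambda>z. cnj (f (cnj z))) contour_integrable_on \<Gamma>"
      by (rule contour_integrable_eq[OF hi]) (simp add: fh)
    from cnj_rect[OF fi[unfolded \<Gamma>_def] this[unfolded \<Gamma>_def]]
    have "cnj (contour_integral \<Gamma> f) = - contour_integral \<Gamma> (\<lambda>z. cnj (f (cnj z)))" unfolding \<Gamma>_def .
    also have "contour_integral \<Gamma> (\<lambda>z. cnj (f (cnj z))) = contour_integral \<Gamma> h"
      by (rule contour_integral_eq) (simp add: fh)
    finally show ?thesis .
  qed
  have F3: "Re (N i) = 0" for i
  proof -
    have "cnj (N i) = - N i" unfolding N_def
      by (rule cnj_int) (auto intro!: integ holomorphic_intros hF hp simp: cF cp)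
    then show ?thesis by (simp add: complex_eq_iff)
  qed
  have F4: "cnj (Mint i j) = - contour_integral \<Gamma> (\<lambda>z. Ff z * (p i z * q' j z))" for i j
    unfolding Mint_def
    by (rule cnj_int) (auto intro!: integ holomorphic_intros hF hp hq' iG simp: Gf cF cp cq)
  have F5: "(\<Sum>j\<in>UNIV. Mint i j + cnj (Mint i j)) = 4 * pi" for i
  proof -
    have "(\<Sum>j\<in>UNIV. Mint i j + cnj (Mint i j)) =
        (\<Sum>j\<in>UNIV. Mint i j) - (\<Sum>j\<in>UNIV. contour_integral \<Gamma> (\<lambda>z. Ff z * (p i z * q' j z)))"
      by (simp add: F4 sum_subtractf)
    also have "\<dots> = contour_integral \<Gamma> (\<lambda>z. \<Sum>j\<in>UNIV. G i j z) - contour_integral \<Gamma> (\<lambda>z. \<Sum>j\<in>UNIV. Ff z * (p i z * q' j z))"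
    proof -
      have s1: "(\<Sum>j\<in>UNIV. Mint i j) = contour_integral \<Gamma> (\<lambda>z. \<Sum>j\<in>UNIV. G i j z)"
        unfolding Mint_def by (rule contour_integral_sum[symmetric]) (simp_all add: iG)
      have s2: "(\<Sum>j\<in>UNIV. contour_integral \<Gamma> (\<lambda>z. Ff z * (p i z * q' j z))) =
          contour_integral \<Gamma> (\<lambda>z. \<Sum>j\<in>UNIV. Ff z * (p i z * q' j z))"
        by (rule contour_integral_sum[symmetric]) (auto intro!: integ holomorphic_intros hF hp hq')
      show ?thesis unfolding s1 s2 ..
    qed
    also have "\<dots> = contour_integral \<Gamma> (\<lambda>z. (\<Sum>j\<in>UNIV. G i j z) - (\<Sum>j\<in>UNIV. Ff z * (p i z * q' j z)))"
      by (rule contour_integral_diff[symmetric]) (auto intro!: integ holomorphic_intros hF hp hq hq' simp: Gf)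
    also have "\<dots> = contour_integral \<Gamma> (\<lambda>z. 2 * \<i> * p i z)"
    proof (rule contour_integral_eq)
      fix z assume zG: "z \<in> path_image \<Gamma>"
      have zs: "z \<in> strip \<eta>" using zG imgU U_strip by blast
      have sq: "(\<Sum>j\<in>UNIV. q j z) = sB B (z + \<i> * of_real \<eta>)"
        unfolding q_def sB_alt by (rule sum.swap)
      have sq': "(\<Sum>j\<in>UNIV. q' j z) = sB B (z - \<i> * of_real \<eta>)"
        unfolding q'_def sB_alt by (rule sum.swap)
      have "(\<Sum>j\<in>UNIV. G i j z) - (\<Sum>j\<in>UNIV. Ff z * (p i z * q' j z))
          = p i z * (Ff z * (sB B (z + \<i> * of_real \<eta>) - sB B (z - \<i> * of_real \<eta>)))"
        unfolding Gf sq[symmetric] sq'[symmetric] by (simp add: sum_distrib_left algebra_simps)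
      also have "\<dots> = 2 * \<i> * p i z" unfolding Ff_def Ffun_mult[OF symB zs] by simp
      finally show "(\<Sum>j\<in>UNIV. G i j z) - (\<Sum>j\<in>UNIV. Ff z * (p i z * q' j z)) = 2 * \<i> * p i z" .
    qed
    also have "\<dots> = 2 * \<i> * (\<Sum>m\<in>UNIV. contour_integral \<Gamma> (\<lambda>z. resolvent A z $ i $ m))"
    proof -
      have ints: "(\<lambda>z. resolvent A z $ i $ m) contour_integrable_on \<Gamma>" for m
        by (intro integ resolvent_holo[where g="\<lambda>z. z"] holomorphic_intros invA)
      have "contour_integral \<Gamma> (\<lambda>z. 2 * \<i> * p i z) = 2 * \<i> * contour_integral \<Gamma> (p i)"
        by (rule contour_integral_lmul) (intro integ hp)
      also have "contour_integral \<Gamma> (p i) = (\<Sum>m\<in>UNIV. contour_integral \<Gamma> (\<lambda>z. resolvent A z $ i $ m))"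
        unfolding p_def by (rule contour_integral_sum) (simp_all add: ints)
      finally show ?thesis .
    qed
    also have "\<dots> = 2 * \<i> * (- 2 * pi * \<i>)"
    proof -
      have nA3: "spec_norm A < 3" using nA by simp
      have r: "contour_integral \<Gamma> (\<lambda>z. resolvent A z $ i $ m) = - 2 * pi * \<i> * (if i = m then 1 else 0)" for m
        unfolding \<Gamma>_def by (rule resolvent_integral[OF symA nA3 eta])
      have "(\<Sum>m\<in>UNIV. - 2 * pi * \<i> * (if i = m then 1 else 0)) = - 2 * pi * \<i> * (\<Sum>m\<in>UNIV. if i = m then 1 else 0)"
        by (rule sum_distrib_left[symmetric])
      also have "(\<Sum>m\<in>UNIV. if i = m then (1::complex) else 0) = 1" by simp
      finally show ?thesis unfolding r by simp
    qed
    also have "\<dots> = 4 * pi"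
    proof -
      have "2 * \<i> * (- 2 * pi * \<i>) = - 4 * pi * (\<i> * \<i>)" by (simp add: mult_ac)
      also have "\<dots> = 4 * pi" by simp
      finally show ?thesis .
    qed
    finally show ?thesis .
  qed
  define Y :: "real^'n^'n" where "Y = (\<chi> i j. Re (Mint i j) / (2 * pi))"
  define Z :: "real^'n^'n" where "Z = (\<chi> i j. Im (Mint i j) / (2 * pi))"
  define c :: "real^'n" where "c = (\<chi> i. - Im (N i) / (2 * pi))"
  have Y1: "Y *v onesv = onesv"
  proof -
    have "(\<Sum>j\<in>UNIV. Re (Mint i j)) = 2 * pi" for i
    proof -
      have "Re (\<Sum>j\<in>UNIV. Mint i j + cnj (Mint i j)) = 4 * pi" using F5[of i] by simp
      then show ?thesis by (simp add: Re_sum sum.distrib)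
    qed
    then show ?thesis unfolding Y_def by (simp add: vec_eq_iff matrix_vector_mult_def onesv_def sum_divide_distrib[symmetric])
  qed
  have e1: "A ** Y - Y ** B = \<eta> *\<^sub>R Z"
  proof (subst vec_eq_iff, intro allI, subst vec_eq_iff, intro allI)
    fix i j
    have "Re (- N i) = 0" using F3 by simp
    then have "Re ((\<Sum>k\<in>UNIV. of_real (A$i$k) * Mint k j) - (\<Sum>k\<in>UNIV. Mint i k * of_real (B$k$j)) + \<i> * of_real \<eta> * Mint i j) = 0"
      unfolding F2 .
    then have "(\<Sum>k\<in>UNIV. A$i$k * Re (Mint k j)) - (\<Sum>k\<in>UNIV. Re (Mint i k) * B$k$j) - \<eta> * Im (Mint i j) = 0"
      by (simp add: Re_sum)
    then show "(A ** Y - Y ** B) $ i $ j = (\<eta> *\<^sub>R Z) $ i $ j"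
      unfolding Y_def Z_def by (simp add: matrix_matrix_mult_def sum_divide_distrib[symmetric] field_simps)
  qed
  have e2: "A ** Z - Z ** B + \<eta> *\<^sub>R Y = (\<chi> i j. c$i)"
  proof (subst vec_eq_iff, intro allI, subst vec_eq_iff, intro allI)
    fix i j
    have "Im ((\<Sum>k\<in>UNIV. of_real (A$i$k) * Mint k j) - (\<Sum>k\<in>UNIV. Mint i k * of_real (B$k$j)) + \<i> * of_real \<eta> * Mint i j) = - Im (N i)"
      unfolding F2 by simp
    then have "(\<Sum>k\<in>UNIV. A$i$k * Im (Mint k j)) - (\<Sum>k\<in>UNIV. Im (Mint i k) * B$k$j) + \<eta> * Re (Mint i j) = - Im (N i)"
      by (simp add: Im_sum)
    then have hB: "(\<Sum>k\<in>UNIV. Im (Mint i k) * B$k$j) = (\<Sum>k\<in>UNIV. A$i$k * Im (Mint k j)) + \<eta> * Re (Mint i j) + Im (N i)"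
      by simp
    show "(A ** Z - Z ** B + \<eta> *\<^sub>R Y) $ i $ j = (\<chi> i j. c$i) $ i $ j"
      unfolding Y_def Z_def c_def using hB
      by (simp add: matrix_matrix_mult_def sum_divide_distrib[symmetric] field_simps ring_distribs mult_ac)
  qed
  have "X = Y" by (rule opt_unique[OF symA symB eta Y1 e1 e2 sol])
  then show ?thesis unfolding Y_def Mint_def G_def \<Gamma>_def .
qed


end
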